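(* Let $\varepsilon\in(0,1)$. Let $M=(E,\mathcal{I})$ be a matroid, $u:E\to\mathbb{Z}_{\ge0}$ integer capacities and $k\in\mathbb{N}$. Suppose bases $B_1,\dots,B_k$ (with insertion levels) and levels $\ell:E\to\mathbb{Z}_{\ge0}$ satisfy invariants (I1)–(I3) with height $h>1/\varepsilon+2$. Then there exists a level $j$ such that $$u(E_{<j})+k\,\mathrm{rank}(E_{\ge j})\ \le\ (1+\varepsilon)\sum_{e\in E}\min\{u(e),x(e)\}.$$ Consequently $B_1,\dots,B_k$ is a $1/(1+\varepsilon)$-approximately maximum solution of the $k$-fold matroid union problem and $E_{\ge j}$ is a $(1+\varepsilon)$-approximately minimum dual solution.
   Context: For $e\in E$, $x(e)=|\{i: e\in B_i\}|$; $e$ is uncovered if $x(e)<u(e)$. $u(T)=\sum_{e\in T}u(e)$. The $k$-fold matroid union problem maximizes $\sum_e\min\{u(e),x(e)\}$ over $k$ bases; the dual minimizes $k\,\mathrm{rank}(S)+u(E\setminus S)$ over $S\subseteq E$. Each element $e\in B_i$ carries an insertion level (the value of $\ell(e)$ when $e$ was inserted into $B_i$; levels never decrease, so insertion levels are at most current levels). $E_j=\{e:\ell(e)=j\}$ and analogously $E_{<j},E_{\ge j},E_{>j}$; $B_{i,j}$ (resp. $B_{i,\ge j}$) denotes the elements of $B_i$ with insertion level $j$ (resp. at least $j$). Invariants: (I1) $\ell(e)=0$ whenever $e$ lies in strictly more than $u(e)$ bases; (I2) for all $i$ and $j$, $B_{i,\ge j}$ spans $E_{>j}$; (I3) every uncovered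 $e$ has $\ell(e)\ge h$. *)

theory Defs
  imports Complex_Main
begin

definition matroid :: "'a set \<Rightarrow> ('a set \<Rightarrow> bool) \<Rightarrow> bool" where
  "matroid E indep \<longleftrightarrow>
     finite E \<and>
     (\<forall>I. indep I \<longrightarrow> I \<subseteq> E) \<and>
     indep {} \<and>
     (\<forall>I J. indep J \<and> I \<subseteq> J \<longrightarrow> indep I) \<and>
     (\<forall>I J. indep I \<and> indep J \<and> card I < card J \<longrightarrow> (\<exists>e \<in> J - I. indep (insert e I)))"

definition mrank :: "('a set \<Rightarrow> bool) \<Rightarrow> 'a set \<Rightarrow> nat" where
  "mrank indep S = Max {card I | I. I \<subseteq> S \<and> indep I}"

definition is_basis :: "'a set \<Rightarrow> ('a set \<Rightarrow> bool) \<Rightarrow> 'a set \<Rightarrow> bool" where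
  "is_basis E indep B \<longleftrightarrow> B \<subseteq> E \<and> indep B \<and> (\<forall>e \<in> E - B. \<not> indep (insert e B))"

definition spans :: "('a set \<Rightarrow> bool) \<Rightarrow> 'a set \<Rightarrow> 'a set \<Rightarrow> bool" where
  "spans indep S T \<longleftrightarrow> mrank indep (S \<union> T) = mrank indep S"

text \<open>Multiplicity x(e): number of bases among B_1..B_k (indexed 0..k-1) containing e.\<close>
definition mult :: "nat \<Rightarrow> (nat \<Rightarrow> 'a set) \<Rightarrow> 'a \<Rightarrow> nat" where
  "mult k B e = card {i \<in> {..<k}. e \<in> B i}"

definition union_value :: "'a set \<Rightarrow> ('a \<Rightarrow> nat) \<Rightarrow> nat \<Rightarrow> (nat \<Rightarrow> 'a set) \<Rightarrow> nat" where
  "union_value E u k B = (\<Sum>e\<in>E. min (u e) (mult k B e))"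

definition dual_value :: "'a set \<Rightarrow> ('a set \<Rightarrow> bool) \<Rightarrow> ('a \<Rightarrow> nat) \<Rightarrow> nat \<Rightarrow> 'a set \<Rightarrow> nat" where
  "dual_value E indep u k S = k * mrank indep S + sum u (E - S)"

text \<open>Invariants (I1)-(I3). lev = current level \<ell>, ins i e = insertion level of e in B_i.\<close>
definition invariants ::
  "'a set \<Rightarrow> ('a set \<Rightarrow> bool) \<Rightarrow> ('a \<Rightarrow> nat) \<Rightarrow> nat \<Rightarrow> (nat \<Rightarrow> 'a set)
     \<Rightarrow> (nat \<Rightarrow> 'a \<Rightarrow> nat) \<Rightarrow> ('a \<Rightarrow> nat) \<Rightarrow> nat \<Rightarrow> bool" where
  "invariants E indep u k B ins lev h \<longleftrightarrow>
     (\<forall>i<k. is_basis E indep (B i)) \<and>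
     (\<forall>i<k. \<forall>e\<in>B i. ins i e \<le> lev e) \<and>
     (\<forall>e\<in>E. mult k B e > u e \<longrightarrow> lev e = 0) \<and>
     (\<forall>i<k. \<forall>j::nat. spans indep {e \<in> B i. ins i e \<ge> j} {e \<in> E. lev e > j}) \<and>
     (\<forall>e\<in>E. mult k B e < u e \<longrightarrow> lev e \<ge> h)"

end

theory Submission imports Defs begin

lemma mult_sum: "mult k B e = (\<Sum>i<k. if e \<in> B i then 1 else 0)"
  unfolding mult_def by (simp add: sum.If_cases) (metis Collect_conj_eq lessThan_def)

lemma dbl: assumes "finite A" shows "(\<Sum>i<k. card (B i \<inter> A)) = (\<Sum>e\<in>A. mult k B e)"
proof -
  have "card (B i \<inter> A) = (\<Sum>e\<in>A. if e \<in> B i then 1 else 0)" for i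
    using assms by (simp add: sum.If_cases Int_commute)
  then show ?thesis by (simp add: mult_sum sum.swap[of _ A])
qed

lemma rank_fin: assumes "matroid E indep" shows "finite {card I | I. I \<subseteq> S \<and> indep I}"
proof -
  have "{card I | I. I \<subseteq> S \<and> indep I} \<subseteq> card ` Pow E" using assms unfolding matroid_def by auto
  moreover have "finite E" using assms unfolding matroid_def by auto
  ultimately show ?thesis by (meson finite_Pow_iff finite_imageI finite_subset)
qed

lemma rank_ge: assumes "matroid E indep" "indep I" "I \<subseteq> S" shows "card I \<le> mrank indep S"
  unfolding mrank_def using assms rank_fin[OF assms(1)] by (intro Max_ge) auto

lemma rank_obtain: assumes "matroid E indep" shows "\<exists>I. I \<subseteq> S \<and> indep I \<and> mrank indep S = card I"
proof -
  have "indep {}" using assms unfolding matroid_def by auto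
  then have "{card I | I. I \<subseteq> S \<and> indep I} \<noteq> {}" by blast
  from Max_in[OF rank_fin[OF assms] this] show ?thesis unfolding mrank_def by auto
qed

lemma rank_le_card: assumes "matroid E indep" "finite S" shows "mrank indep S \<le> card S"
  using rank_obtain[OF assms(1), of S] assms(2) by (metis card_mono)

lemma rank_mono: assumes "matroid E indep" "S \<subseteq> T" shows "mrank indep S \<le> mrank indep T"
  using rank_obtain[OF assms(1), of S] rank_ge[OF assms(1)] assms(2) by (metis order_trans)

lemma weak_dual:
  assumes M: "matroid E indep" and B: "\<forall>i<k. is_basis E indep (B i)" and S: "S \<subseteq> E"
  shows "union_value E u k B \<le> dual_value E indep u k S"
proof -
  have fE: "finite E" using M unfolding matroid_def by auto
  have fS: "finite S" using fE S finite_subset by blast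
  have "union_value E u k B = (\<Sum>e\<in>E-S. min (u e) (mult k B e)) + (\<Sum>e\<in>S. min (u e) (mult k B e))"
    unfolding union_value_def by (rule sum.subset_diff[OF S fE])
  also have "\<dots> \<le> sum u (E - S) + (\<Sum>e\<in>S. mult k B e)"
    by (intro add_mono sum_mono) auto
  also have "(\<Sum>e\<in>S. mult k B e) = (\<Sum>i<k. card (B i \<inter> S))" using dbl[OF fS] by simp
  also have "(\<Sum>i<k. card (B i \<inter> S)) \<le> (\<Sum>i<k. mrank indep S)"
  proof (intro sum_mono)
    fix i assume "i \<in> {..<k}"
    then have "indep (B i)" using B unfolding is_basis_def by auto
    then have "indep (B i \<inter> S)" using M unfolding matroid_def by blast
    then show "card (B i \<inter> S) \<le> mrank indep S" using rank_ge[OF M] by blast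
  qed
  finally show ?thesis unfolding dual_value_def by simp
qed

lemma key:
  assumes M: "matroid E indep" and inv: "invariants E indep u k B ins lev h"
    and l1: "1 \<le> l" and lh: "l < h"
  shows "sum u {e \<in> E. lev e < Suc l} + k * mrank indep {e \<in> E. lev e \<ge> Suc l}
     \<le> union_value E u k B + (\<Sum>e\<in>{e\<in>E. lev e = l}. min (u e) (mult k B e))"
proof -
  define m where "m e = min (u e) (mult k B e)" for e
  have fE: "finite E" using M unfolding matroid_def by auto
  have bas: "\<forall>i<k. is_basis E indep (B i)" and insl: "\<forall>i<k. \<forall>e\<in>B i. ins i e \<le> lev e"
    and I1: "\<forall>e\<in>E. mult k B e > u e \<longrightarrow> lev e = 0"
    and I2: "\<forall>i<k. \<forall>j::nat. spans indep {e \<in> B i. ins i e \<ge> j} {e \<in> E. lev e > j}"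
    and I3: "\<forall>e\<in>E. mult k B e < u e \<longrightarrow> lev e \<ge> h"
    using inv unfolding invariants_def by auto
  have "k * mrank indep {e \<in> E. lev e \<ge> Suc l} = (\<Sum>i<k. mrank indep {e \<in> E. lev e \<ge> Suc l})" by simp
  also have "\<dots> \<le> (\<Sum>i<k. card (B i \<inter> {e\<in>E. lev e \<ge> l}))"
  proof (intro sum_mono)
    fix i assume i: "i \<in> {..<k}"
    let ?S = "{e \<in> B i. ins i e \<ge> l}"
    have BE: "B i \<subseteq> E" using bas i unfolding is_basis_def by auto
    have "mrank indep {e \<in> E. lev e \<ge> Suc l} \<le> mrank indep (?S \<union> {e \<in> E. lev e > l})"
      by (intro rank_mono[OF M]) auto
    also have "\<dots> = mrank indep ?S" using I2 i unfolding spans_def by auto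
    also have "\<dots> \<le> card ?S" using fE BE by (intro rank_le_card[OF M]) (auto intro: finite_subset)
    also have "\<dots> \<le> card (B i \<inter> {e\<in>E. lev e \<ge> l})"
      using fE BE insl i by (intro card_mono) (auto intro: order_trans)
    finally show "mrank indep {e \<in> E. lev e \<ge> Suc l} \<le> card (B i \<inter> {e\<in>E. lev e \<ge> l})" .
  qed
  also have "\<dots> = (\<Sum>e\<in>{e\<in>E. lev e \<ge> l}. mult k B e)" using fE by (intro dbl) auto
  also have "\<dots> = (\<Sum>e\<in>{e\<in>E. lev e \<ge> l}. m e)"
  proof (intro sum.cong refl)
    fix e assume "e \<in> {e\<in>E. lev e \<ge> l}"
    then show "mult k B e = m e" using I1 l1 unfolding m_def by force
  qed
  also have "\<dots> = (\<Sum>e\<in>{e\<in>E. lev e \<ge> Suc l}. m e) + (\<Sum>e\<in>{e\<in>E. lev e = l}. m e)"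
  proof -
    have "{e\<in>E. lev e \<ge> l} = {e\<in>E. lev e \<ge> Suc l} \<union> {e\<in>E. lev e = l}" by auto
    moreover have "{e\<in>E. lev e \<ge> Suc l} \<inter> {e\<in>E. lev e = l} = {}" by auto
    moreover have "finite {e\<in>E. lev e \<ge> Suc l}" "finite {e\<in>E. lev e = l}" using fE by auto
    ultimately show ?thesis by (simp add: sum.union_disjoint)
  qed
  finally have A: "k * mrank indep {e \<in> E. lev e \<ge> Suc l} \<le> (\<Sum>e\<in>{e\<in>E. lev e \<ge> Suc l}. m e) + (\<Sum>e\<in>{e\<in>E. lev e = l}. m e)" .
  have Bq: "sum u {e \<in> E. lev e < Suc l} = (\<Sum>e\<in>{e \<in> E. lev e < Suc l}. m e)"
  proof (intro sum.cong refl)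
    fix e assume "e \<in> {e\<in>E. lev e < Suc l}"
    then show "u e = m e" using I3 lh unfolding m_def by force
  qed
  have C: "union_value E u k B = (\<Sum>e\<in>{e \<in> E. lev e < Suc l}. m e) + (\<Sum>e\<in>{e\<in>E. lev e \<ge> Suc l}. m e)"
  proof -
    have "E = {e \<in> E. lev e < Suc l} \<union> {e\<in>E. lev e \<ge> Suc l}" by auto
    moreover have "{e \<in> E. lev e < Suc l} \<inter> {e\<in>E. lev e \<ge> Suc l} = {}" by auto
    moreover have "finite {e \<in> E. lev e < Suc l}" "finite {e\<in>E. lev e \<ge> Suc l}" using fE by auto
    ultimately have "sum m E = sum m {e \<in> E. lev e < Suc l} + sum m {e\<in>E. lev e \<ge> Suc l}"
      by (metis sum.union_disjoint)
    then show ?thesis unfolding union_value_def m_def by simp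
  qed
  show ?thesis using A Bq C unfolding m_def by linarith
qed

theorem mainTheorem3:
  fixes E :: "'a set" and indep :: "'a set \<Rightarrow> bool" and u :: "'a \<Rightarrow> nat"
    and k :: nat and B :: "nat \<Rightarrow> 'a set" and ins :: "nat \<Rightarrow> 'a \<Rightarrow> nat"
    and lev :: "'a \<Rightarrow> nat" and h :: nat and \<epsilon> :: real
  assumes "0 < \<epsilon>" and "\<epsilon> < 1"
    and "matroid E indep"
    and "invariants E indep u k B ins lev h"
    and "real h > 1 / \<epsilon> + 2"
  shows "\<exists>j::nat.
     real (sum u {e \<in> E. lev e < j} + k * mrank indep {e \<in> E. lev e \<ge> j})
       \<le> (1 + \<epsilon>) * real (union_value E u k B)
     \<and> (\<forall>B'. (\<forall>i<k. is_basis E indep (B' i)) \<longrightarrow>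
            real (union_value E u k B') \<le> (1 + \<epsilon>) * real (union_value E u k B))
     \<and> (\<forall>S \<subseteq> E. real (dual_value E indep u k {e \<in> E. lev e \<ge> j})
            \<le> (1 + \<epsilon>) * real (dual_value E indep u k S))"
proof -
  note M = assms(3) and inv = assms(4)
  define m where "m e = min (u e) (mult k B e)" for e
  define f where "f l = (\<Sum>e\<in>{e\<in>E. lev e = l}. m e)" for l
  define V where "V = union_value E u k B"
  have fE: "finite E" using M unfolding matroid_def by auto
  have "0 < 1 / \<epsilon>" using assms(1) by simp
  then have "real h > 2" using assms(5) by linarith
  then have hpos: "h \<ge> 2" by simp
  then have rh: "real (h - 1) = real h - 1" by simp
  have h1: "1 / \<epsilon> < real (h - 1)" using assms(5) rh by linarith
  have ex: "\<exists>l\<in>{1..h-1}. real (f l) \<le> \<epsilon> * real V"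
  proof (rule ccontr)
    assume "\<not> ?thesis"
    then have lt: "\<forall>l\<in>{1..h-1}. \<epsilon> * real V < real (f l)" by auto
    have "(\<Sum>l\<in>{1..h-1}. f l) = (\<Sum>e\<in>{e\<in>E. lev e \<in> {1..h-1}}. m e)"
    proof -
      have "(\<Sum>l\<in>{1..h-1}. f l) = (\<Sum>l\<in>{1..h-1}. sum m {x\<in>{e\<in>E. lev e \<in> {1..h-1}}. lev x = l})"
        unfolding f_def by (intro sum.cong refl arg_cong2[where f=sum]) auto
      also have "\<dots> = (\<Sum>e\<in>{e\<in>E. lev e \<in> {1..h-1}}. m e)"
        using fE by (intro sum.group) auto
      finally show ?thesis .
    qed
    also have "\<dots> \<le> V" unfolding V_def union_value_def m_def using fE by (intro sum_mono2) auto
    finally have "real (\<Sum>l\<in>{1..h-1}. f l) \<le> real V" by linarith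
    moreover have "(\<Sum>l\<in>{1..h-1}. \<epsilon> * real V) < (\<Sum>l\<in>{1..h-1}. real (f l))"
      using lt hpos by (intro sum_strict_mono) auto
    moreover have "(\<Sum>l\<in>{1..h-1}. \<epsilon> * real V) = real (h - 1) * \<epsilon> * real V" by simp
    moreover have "real V \<le> real (h - 1) * \<epsilon> * real V"
    proof -
      have "1 / \<epsilon> * \<epsilon> \<le> real (h - 1) * \<epsilon>" using h1 assms(1) by (intro mult_right_mono) auto
      moreover have "1 / \<epsilon> * \<epsilon> = 1" using assms(1) by simp
      ultimately have "1 \<le> real (h - 1) * \<epsilon>" by linarith
      from mult_right_mono[OF this, of "real V"] show ?thesis by simp
    qed
    ultimately show False by simp
  qed
  then obtain l where l: "1 \<le> l" "l \<le> h - 1" "real (f l) \<le> \<epsilon> * real V" by auto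
  define j where "j = Suc l"
  have kj: "sum u {e \<in> E. lev e < j} + k * mrank indep {e \<in> E. lev e \<ge> j} \<le> V + f l"
    unfolding j_def V_def f_def m_def using key[OF M inv l(1)] l(2) hpos by simp
  have D1: "real (sum u {e \<in> E. lev e < j} + k * mrank indep {e \<in> E. lev e \<ge> j}) \<le> (1 + \<epsilon>) * real V"
  proof -
    have "real (sum u {e \<in> E. lev e < j} + k * mrank indep {e \<in> E. lev e \<ge> j}) \<le> real (V + f l)"
      using kj by (simp only: of_nat_le_iff)
    moreover have "(1 + \<epsilon>) * real V = real V + \<epsilon> * real V" by (simp add: algebra_simps)
    ultimately show ?thesis using l(3) by simp
  qed
  have dv: "dual_value E indep u k {e \<in> E. lev e \<ge> j} = sum u {e \<in> E. lev e < j} + k * mrank indep {e \<in> E. lev e \<ge> j}"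
  proof -
    have "E - {e \<in> E. lev e \<ge> j} = {e \<in> E. lev e < j}" by auto
    then show ?thesis unfolding dual_value_def by simp
  qed
  have bas: "\<forall>i<k. is_basis E indep (B i)" using inv unfolding invariants_def by auto
  show ?thesis
  proof (intro exI[of _ j] conjI allI impI)
    show "real (sum u {e \<in> E. lev e < j} + k * mrank indep {e \<in> E. lev e \<ge> j}) \<le> (1 + \<epsilon>) * real (union_value E u k B)"
      using D1 V_def by simp
  next
    fix B' assume "\<forall>i<k. is_basis E indep (B' i)"
    then have "union_value E u k B' \<le> dual_value E indep u k {e \<in> E. lev e \<ge> j}"
      by (intro weak_dual[OF M]) auto
    then show "real (union_value E u k B') \<le> (1 + \<epsilon>) * real (union_value E u k B)"
      using D1 dv V_def by (metis of_nat_le_iff order_trans)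
  next
    fix S assume S: "S \<subseteq> E"
    have "V \<le> dual_value E indep u k S" unfolding V_def by (rule weak_dual[OF M bas S])
    then have "(1 + \<epsilon>) * real V \<le> (1 + \<epsilon>) * real (dual_value E indep u k S)"
      using assms(1) by (intro mult_left_mono) auto
    then show "real (dual_value E indep u k {e \<in> E. lev e \<ge> j}) \<le> (1 + \<epsilon>) * real (dual_value E indep u k S)"
      using D1 dv by simp
  qed
qed

end
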